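(* For every integer $m\geq 3$ there exists a connected cubic graph $G$ of order $2n$ such that every edge of $G$ is contained in at least one $[n-1]$-matching of $G$ (so $\chi'_{[n-1]}(G)$ is finite) and $\chi'_{[n-1]}(G)\geq m$.
   Context: All graphs are finite, simple (no loops, no parallel edges), connected and cubic (3-regular). For a positive integer $k$, a $[k]$-matching of $G$ is a matching of $G$ with exactly $k$ edges. The excessive $[k]$-index $\chi'_{[k]}(G)$ is the minimum number of $[k]$-matchings of $G$ whose union is $E(G)$; if some edge of $G$ lies in no $[k]$-matching, one sets $\chi'_{[k]}(G)=\infty$. *)

theory Defs
  imports Main "HOL-Library.Extended_Nat"
begin

definition simple_graph :: "'a set \<Rightarrow> 'a set set \<Rightarrow> bool" where
  "simple_graph V E \<longleftrightarrow> finite V \<and>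
     (\<forall>e\<in>E. \<exists>u v. e = {u, v} \<and> u \<noteq> v \<and> u \<in> V \<and> v \<in> V)"

definition degree :: "'a set set \<Rightarrow> 'a \<Rightarrow> nat" where
  "degree E v = card {e\<in>E. v \<in> e}"

definition cubic :: "'a set \<Rightarrow> 'a set set \<Rightarrow> bool" where
  "cubic V E \<longleftrightarrow> (\<forall>v\<in>V. degree E v = 3)"

definition adj :: "'a set set \<Rightarrow> 'a \<Rightarrow> 'a \<Rightarrow> bool" where
  "adj E u v \<longleftrightarrow> {u, v} \<in> E"

definition connected_graph :: "'a set \<Rightarrow> 'a set set \<Rightarrow> bool" where
  "connected_graph V E \<longleftrightarrow> V \<noteq> {} \<and> (\<forall>u\<in>V. \<forall>v\<in>V. (adj E)\<^sup>*\<^sup>* u v)"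

definition matching :: "'a set set \<Rightarrow> 'a set set \<Rightarrow> bool" where
  "matching E M \<longleftrightarrow> M \<subseteq> E \<and> (\<forall>e\<in>M. \<forall>f\<in>M. e \<noteq> f \<longrightarrow> e \<inter> f = {})"

definition k_matching :: "'a set set \<Rightarrow> nat \<Rightarrow> 'a set set \<Rightarrow> bool" where
  "k_matching E k M \<longleftrightarrow> matching E M \<and> card M = k"

definition excessive_index :: "'a set set \<Rightarrow> nat \<Rightarrow> enat" where
  "excessive_index E k =
     (if \<forall>e\<in>E. \<exists>M. k_matching E k M \<and> e \<in> M
      then enat (LEAST t. \<exists>Ms. length Ms = t \<and> (\<forall>M\<in>set Ms. k_matching E k M)
                            \<and> \<Union>(set Ms) = E)
      else \<infinity>)"

end

theory Submission
  imports Defs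
begin

definition vx :: "nat \<Rightarrow> nat \<Rightarrow> nat" where "vx i r = 8*i + r"

lemma vx_div[simp]: "r < 8 \<Longrightarrow> vx i r div 8 = i" by (simp add: vx_def)
lemma vx_mod[simp]: "r < 8 \<Longrightarrow> vx i r mod 8 = r" by (simp add: vx_def)
lemma vx_eq[simp]: "r < 8 \<Longrightarrow> r' < 8 \<Longrightarrow> (vx i r = vx j r') = (i = j \<and> r = r')"
  by (metis vx_div vx_mod)
lemma vx_dvd[simp]: "r < 8 \<Longrightarrow> (8 dvd vx i r) = (r = 0)" by (auto simp: vx_def dvd_add_right_iff)
lemma vdm: "vx (v div 8) (v mod 8) = v" by (simp add: vx_def)
lemma vx_lt[simp]: "r < 8 \<Longrightarrow> (vx i r < 8*s) = (i < s)" by (auto simp: vx_def)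

definition nxt :: "nat \<Rightarrow> nat \<Rightarrow> nat" where "nxt s i = (if Suc i = s then 0 else Suc i)"
definition prv :: "nat \<Rightarrow> nat \<Rightarrow> nat" where "prv s i = (if i = 0 then s - 1 else i - 1)"

definition Nb :: "nat \<Rightarrow> nat \<Rightarrow> nat \<Rightarrow> nat set" where
 "Nb s i r = (if r = 0 then {vx i 1, vx i 6, vx i 7}
   else if r = 1 then {vx i 0, vx i 2, vx i 3}
   else if r = 2 then {vx i 1, vx i 4, vx i 5}
   else if r = 3 then {vx i 1, vx i 4, vx i 5}
   else if r = 4 then {vx i 2, vx i 3, vx i 5}
   else if r = 5 then {vx i 2, vx i 3, vx i 4}
   else if r = 6 then {vx i 0, vx i 7, vx (prv s i) 7}
   else {vx i 0, vx i 6, vx (nxt s i) 6})"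

definition N :: "nat \<Rightarrow> nat \<Rightarrow> nat set" where "N s v = Nb s (v div 8) (v mod 8)"

lemma N_at[simp]: "r < 8 \<Longrightarrow> N s (vx i r) = Nb s i r" by (simp add: N_def)

definition Ed :: "nat \<Rightarrow> nat set set" where "Ed s = {{v,u} | v u. v < 8*s \<and> u \<in> N s v}"

lemma r8: "(r::nat) < 8 \<Longrightarrow> r = 0 \<or> r = 1 \<or> r = 2 \<or> r = 3 \<or> r = 4 \<or> r = 5 \<or> r = 6 \<or> r = 7" by arith

lemma vsplit: "(v::nat) < 8*s \<Longrightarrow> (\<And>i r. i < s \<Longrightarrow> r < 8 \<Longrightarrow> v = vx i r \<Longrightarrow> P) \<Longrightarrow> P"
  unfolding vx_def by (metis div_less_iff_less_mult div_mult_mod_eq mod_less_divisor mult.commute zero_less_numeral)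

lemma nxt_lt[simp]: "i < s \<Longrightarrow> nxt s i < s" by (auto simp: nxt_def)
lemma prv_lt[simp]: "i < s \<Longrightarrow> prv s i < s" by (auto simp: prv_def)
lemma nxt_prv[simp]: "i < s \<Longrightarrow> nxt s (prv s i) = i" by (auto simp: nxt_def prv_def)
lemma prv_nxt[simp]: "i < s \<Longrightarrow> prv s (nxt s i) = i" by (auto simp: nxt_def prv_def)
lemma prv_ne: "i < s \<Longrightarrow> 2 \<le> s \<Longrightarrow> prv s i \<noteq> i" by (auto simp: prv_def)
lemma nxt_ne: "i < s \<Longrightarrow> 2 \<le> s \<Longrightarrow> nxt s i \<noteq> i" by (auto simp: nxt_def)

lemma Nb_sym: assumes i: "i < s" and r: "r < 8" and u: "u \<in> Nb s i r"
  shows "u = vx (u div 8) (u mod 8) \<and> u div 8 < s \<and> u mod 8 < 8 \<and> vx i r \<in> Nb s (u div 8) (u mod 8) \<and> u \<noteq> vx i r"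
  using r8[OF r] u i by (elim disjE) (auto simp: Nb_def)

lemma N_sym: assumes "v < 8*s" "u \<in> N s v"
  shows "u < 8*s \<and> v \<in> N s u \<and> u \<noteq> v"
  using assms(1)
proof (rule vsplit)
  fix i r assume i: "i < s" and r: "r < 8" and v: "v = vx i r"
  have "u \<in> Nb s i r" using assms(2) v r by simp
  from Nb_sym[OF i r this] obtain j r' where "u = vx j r'" "j < s" "r' < 8" "vx i r \<in> Nb s j r'" "u \<noteq> vx i r"
    by metis
  then show ?thesis using v by simp
qed

lemma N_card: assumes "v < 8*s" "2 \<le> s" shows "card (N s v) = 3"
  using assms(1)
proof (rule vsplit)
  fix i r assume i: "i < s" and r: "r < 8" and v: "v = vx i r"
  show ?thesis using r8[OF r] prv_ne[OF i assms(2)] nxt_ne[OF i assms(2)] r unfolding v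
    by (elim disjE) (auto simp: Nb_def)
qed
lemma Ed_inc: "e \<in> Ed s \<Longrightarrow> v \<in> e \<Longrightarrow> v < 8*s \<and> (\<exists>u\<in>N s v. e = {v,u})"
  unfolding Ed_def using N_sym by (auto simp: insert_commute)

lemma Ed_iff: "v < 8*s \<Longrightarrow> u \<in> N s v \<Longrightarrow> {v,u} \<in> Ed s"
  unfolding Ed_def by blast

lemma inc_eq: assumes "v < 8*s" shows "{e \<in> Ed s. v \<in> e} = (\<lambda>u. {v,u}) ` N s v"
  using Ed_inc[of _ s v] Ed_iff[OF assms] by auto

lemma degree_Ed: assumes "v < 8*s" "2 \<le> s" shows "degree (Ed s) v = 3"
proof -
  have "inj_on (\<lambda>u. {v,u}) (N s v)"
    using N_sym[OF assms(1)] by (auto simp: inj_on_def doubleton_eq_iff)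
  then show ?thesis unfolding degree_def inc_eq[OF assms(1)]
    by (simp add: card_image N_card[OF assms])
qed

lemma Ed_sub: "Ed s \<subseteq> Pow {..<8*s}"
  unfolding Ed_def using N_sym by auto

lemma finite_Ed: "finite (Ed s)"
  by (rule finite_subset[OF Ed_sub]) auto

lemma simple_Ed: "simple_graph {..<8*s} (Ed s)"
  unfolding simple_graph_def
proof (intro conjI ballI)
  fix e assume "e \<in> Ed s"
  then obtain v u where "e = {v,u}" "v < 8*s" "u \<in> N s v" by (auto simp: Ed_def)
  then show "\<exists>u v. e = {u, v} \<and> u \<noteq> v \<and> u \<in> {..<8*s} \<and> v \<in> {..<8*s}"
    using N_sym by blast
qed simp

lemma adj_sym: "adj (Ed s) u v \<Longrightarrow> adj (Ed s) v u"
  by (simp add: adj_def insert_commute)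

lemma adjI: "v < 8*s \<Longrightarrow> u \<in> N s v \<Longrightarrow> adj (Ed s) v u"
  by (simp add: adj_def Ed_iff)

lemma adjNb: "i < s \<Longrightarrow> r < 8 \<Longrightarrow> u \<in> Nb s i r \<Longrightarrow> adj (Ed s) (vx i r) u"
  by (rule adjI) auto

lemma reach_hub: "i < s \<Longrightarrow> (adj (Ed s))\<^sup>*\<^sup>* (vx 0 6) (vx i 6)"
proof (induction i)
  case 0 then show ?case by simp
next
  case (Suc i)
  then have i: "i < s" by simp
  have "adj (Ed s) (vx i 6) (vx i 7)" using adjNb[of i s 6 "vx i 7"] i by (simp add: Nb_def)
  moreover have "adj (Ed s) (vx i 7) (vx (nxt s i) 6)" using adjNb[of i s 7 "vx (nxt s i) 6"] i by (simp add: Nb_def)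
  moreover have "nxt s i = Suc i" using Suc.prems by (simp add: nxt_def)
  ultimately show ?case using Suc.IH[OF i]
    by (metis (no_types, lifting) rtranclp.rtrancl_into_rtrancl)
qed

lemma reach_all: assumes "v < 8*s" shows "(adj (Ed s))\<^sup>*\<^sup>* (vx 0 6) v"
  using assms
proof (rule vsplit)
  fix i r assume i: "i < s" and r: "r < 8" and v: "v = vx i r"
  let ?R = "adj (Ed s)"
  have h: "?R\<^sup>*\<^sup>* (vx 0 6) (vx i 6)" by (rule reach_hub[OF i])
  have a0: "?R (vx i 6) (vx i 0)" using adjNb[of i s 6 "vx i 0"] i by (simp add: Nb_def)
  have a7: "?R (vx i 6) (vx i 7)" using adjNb[of i s 6 "vx i 7"] i by (simp add: Nb_def)
  have a1: "?R (vx i 0) (vx i 1)" using adjNb[of i s 0 "vx i 1"] i by (simp add: Nb_def)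
  have a2: "?R (vx i 1) (vx i 2)" using adjNb[of i s 1 "vx i 2"] i by (simp add: Nb_def)
  have a3: "?R (vx i 1) (vx i 3)" using adjNb[of i s 1 "vx i 3"] i by (simp add: Nb_def)
  have a4: "?R (vx i 2) (vx i 4)" using adjNb[of i s 2 "vx i 4"] i by (simp add: Nb_def)
  have a5: "?R (vx i 2) (vx i 5)" using adjNb[of i s 2 "vx i 5"] i by (simp add: Nb_def)
  have b0: "?R\<^sup>*\<^sup>* (vx 0 6) (vx i 0)" using h a0 by (rule rtranclp.rtrancl_into_rtrancl)
  have b1: "?R\<^sup>*\<^sup>* (vx 0 6) (vx i 1)" using b0 a1 by (rule rtranclp.rtrancl_into_rtrancl)
  have b2: "?R\<^sup>*\<^sup>* (vx 0 6) (vx i 2)" using b1 a2 by (rule rtranclp.rtrancl_into_rtrancl)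
  have b3: "?R\<^sup>*\<^sup>* (vx 0 6) (vx i 3)" using b1 a3 by (rule rtranclp.rtrancl_into_rtrancl)
  have b4: "?R\<^sup>*\<^sup>* (vx 0 6) (vx i 4)" using b2 a4 by (rule rtranclp.rtrancl_into_rtrancl)
  have b5: "?R\<^sup>*\<^sup>* (vx 0 6) (vx i 5)" using b2 a5 by (rule rtranclp.rtrancl_into_rtrancl)
  have b7: "?R\<^sup>*\<^sup>* (vx 0 6) (vx i 7)" using h a7 by (rule rtranclp.rtrancl_into_rtrancl)
  show ?thesis using r8[OF r] v b0 b1 b2 b3 b4 b5 h b7 by auto
qed

lemma rt_sym: "(adj (Ed s))\<^sup>*\<^sup>* u v \<Longrightarrow> (adj (Ed s))\<^sup>*\<^sup>* v u"
proof (induction rule: rtranclp_induct)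
  case base then show ?case by simp
next
  case (step y z)
  then show ?case using adj_sym by (meson converse_rtranclp_into_rtranclp)
qed

lemma conn_Ed: "1 \<le> s \<Longrightarrow> connected_graph {..<8*s} (Ed s)"
proof -
  assume "1 \<le> s"
  then have "0 \<in> {..<8*s}" by simp
  moreover have "(adj (Ed s))\<^sup>*\<^sup>* u v" if "u < 8*s" "v < 8*s" for u v
  proof -
    have "(adj (Ed s))\<^sup>*\<^sup>* u (vx 0 6)" using rt_sym[OF reach_all[OF that(1)]] .
    then show ?thesis using reach_all[OF that(2)] by (rule rtranclp_trans)
  qed
  ultimately show ?thesis unfolding connected_graph_def lessThan_iff by blast
qed

lemma union_card:
  assumes "finite M" "\<forall>e\<in>M. card e = 2" "\<forall>e\<in>M. \<forall>f\<in>M. e \<noteq> f \<longrightarrow> e \<inter> f = {}"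
  shows "card (\<Union>M) = 2 * card M"
proof -
  have "card (\<Union>M) = sum card M"
    using assms by (intro card_Union_disjoint) (auto simp: pairwise_def disjnt_def intro: card_ge_0_finite)
  also have "\<dots> = sum (\<lambda>_. 2) M" using assms(2) by (intro sum.cong) auto
  finally show ?thesis by simp
qed

lemma shrink:
  assumes "matching E M" "e \<in> M" "finite M" "k \<le> card M" "1 \<le> k"
  shows "\<exists>M'. k_matching E k M' \<and> e \<in> M'"
proof -
  have "card (M - {e}) = card M - 1" using assms by simp
  then have "k - 1 \<le> card (M - {e})" using assms by simp
  then obtain M0 where M0: "M0 \<subseteq> M - {e}" "card M0 = k - 1"
    using obtain_subset_with_card_n by metis
  have fin: "finite M0" using M0(1) assms(3) finite_subset by blast
  have "e \<notin> M0" using M0(1) by blast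
  then have "card (insert e M0) = k" using M0 fin assms(5) by simp
  moreover have "matching E (insert e M0)" using assms(1,2) M0(1) unfolding matching_def by blast
  ultimately show ?thesis unfolding k_matching_def by blast
qed

definition good :: "nat \<Rightarrow> (nat \<Rightarrow> nat) \<Rightarrow> nat set \<Rightarrow> bool" where
  "good s p D \<longleftrightarrow> D \<subseteq> {..<8*s} \<and> 8*s - 2 \<le> card D \<and> (\<forall>v\<in>D. p v \<in> D \<and> p (p v) = v \<and> p v \<in> N s v)"

lemma good_match:
  assumes g: "good s p D" and v: "v \<in> D" and s: "1 \<le> s"
  shows "\<exists>M. k_matching (Ed s) (4*s-1) M \<and> {v, p v} \<in> M"
proof -
  let ?M = "(\<lambda>w. {w, p w}) ` D"
  have D: "D \<subseteq> {..<8*s}" "8*s - 2 \<le> card D" "\<And>w. w \<in> D \<Longrightarrow> p w \<in> D \<and> p (p w) = w \<and> p w \<in> N s w"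
    using g unfolding good_def by auto
  have finD: "finite D" using D(1) finite_subset by blast
  have ne: "\<And>w. w \<in> D \<Longrightarrow> p w \<noteq> w" using D N_sym by blast
  have sub: "?M \<subseteq> Ed s" using D by (auto intro!: Ed_iff)
  have dis: "\<forall>e\<in>?M. \<forall>f\<in>?M. e \<noteq> f \<longrightarrow> e \<inter> f = {}"
  proof (intro ballI impI)
    fix e f assume ef: "e \<in> ?M" "f \<in> ?M" "e \<noteq> f"
    then obtain w w' where w: "w \<in> D" "e = {w, p w}" and w': "w' \<in> D" "f = {w', p w'}" by blast
    have pp: "p (p w) = w" "p (p w') = w'" using D(3) w w' by auto
    show "e \<inter> f = {}"
    proof (rule ccontr)
      assume "e \<inter> f \<noteq> {}"
      then have "w = w' \<or> w = p w' \<or> p w = w' \<or> p w = p w'" using w w' by blast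
      then have "e = f" using w w' pp by (elim disjE) (metis insert_commute)+
      then show False using ef(3) by simp
    qed
  qed
  have c2: "\<forall>e\<in>?M. card e = 2"
  proof
    fix e assume "e \<in> ?M"
    then obtain w where "w \<in> D" "e = {w, p w}" by blast
    then show "card e = 2" using ne[of w] by auto
  qed
  have un: "\<Union>?M = D" using D(3) by auto
  have "card D = 2 * card ?M" using union_card[OF _ c2 dis] finD un by simp
  then have "4*s - 1 \<le> card ?M" using D(2) by linarith
  moreover have "matching (Ed s) ?M" unfolding matching_def using sub dis by blast
  ultimately show ?thesis using shrink[of "Ed s" ?M "{v, p v}" "4*s-1"] v finD s by auto
qed

definition P :: "(nat \<Rightarrow> nat \<Rightarrow> nat) \<Rightarrow> (nat \<Rightarrow> nat \<Rightarrow> nat) \<Rightarrow> nat \<Rightarrow> nat" where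
  "P g f v = vx (g (v div 8) (v mod 8)) (f (v div 8) (v mod 8))"

lemma P_at: "r < 8 \<Longrightarrow> P g f (vx i r) = vx (g i r) (f i r)" by (simp add: P_def)

lemma P_good:
  assumes H: "\<And>i r. i < s \<Longrightarrow> r < 8 \<Longrightarrow> ok i r \<Longrightarrow> g i r < s \<and> f i r < 8 \<and> ok (g i r) (f i r)
      \<and> g (g i r) (f i r) = i \<and> f (g i r) (f i r) = r \<and> vx (g i r) (f i r) \<in> Nb s i r"
    and C: "8*s - 2 \<le> card {v. v < 8*s \<and> ok (v div 8) (v mod 8)}"
  shows "good s (P g f) {v. v < 8*s \<and> ok (v div 8) (v mod 8)}"
  unfolding good_def
proof (intro conjI)
  show "{v. v < 8*s \<and> ok (v div 8) (v mod 8)} \<subseteq> {..<8*s}" by auto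
  show "8*s - 2 \<le> card {v. v < 8*s \<and> ok (v div 8) (v mod 8)}" by (rule C)
  show "\<forall>v\<in>{v. v < 8*s \<and> ok (v div 8) (v mod 8)}. P g f v \<in> {v. v < 8*s \<and> ok (v div 8) (v mod 8)} \<and> P g f (P g f v) = v \<and> P g f v \<in> N s v"
  proof
    fix v assume "v \<in> {v. v < 8*s \<and> ok (v div 8) (v mod 8)}"
    then have v: "v < 8*s" and okv: "ok (v div 8) (v mod 8)" by auto
    from v show "P g f v \<in> {v. v < 8*s \<and> ok (v div 8) (v mod 8)} \<and> P g f (P g f v) = v \<and> P g f v \<in> N s v"
    proof (rule vsplit)
      fix i r assume i: "i < s" and r: "r < 8" and vv: "v = vx i r"
      have ok: "ok i r" using okv vv r by simp
      note h = H[OF i r ok]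
      have pv: "P g f v = vx (g i r) (f i r)" using vv r by (simp add: P_at)
      have ppv: "P g f (P g f v) = v" using pv h vv by (simp add: P_at)
      show ?thesis using pv ppv h vv r by simp
    qed
  qed
qed

definition fA :: "nat \<Rightarrow> nat" where
  "fA r = (if r = 0 then 1 else if r = 1 then 0 else if r = 2 then 4 else if r = 4 then 2
     else if r = 3 then 5 else if r = 5 then 3 else if r = 6 then 7 else 6)"
definition fB :: "nat \<Rightarrow> nat" where
  "fB r = (if r = 0 then 1 else if r = 1 then 0 else if r = 2 then 5 else if r = 5 then 2
     else if r = 3 then 4 else if r = 4 then 3 else if r = 6 then 7 else 6)"
definition gB :: "nat \<Rightarrow> nat \<Rightarrow> nat \<Rightarrow> nat" where
  "gB s i r = (if r = 6 then prv s i else if r = 7 then nxt s i else i)"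
definition fJ :: "nat \<Rightarrow> nat \<Rightarrow> nat \<Rightarrow> nat" where
  "fJ j i r = (if i = j then (if r = 0 then 6 else if r = 6 then 0 else if r = 1 then 2 else if r = 2 then 1
     else if r = 4 then 5 else if r = 5 then 4 else r) else fA r)"
definition fK :: "nat \<Rightarrow> nat \<Rightarrow> nat \<Rightarrow> nat" where
  "fK j i r = (if i = j then (if r = 0 then 7 else if r = 7 then 0 else if r = 1 then 3 else if r = 3 then 1
     else if r = 4 then 5 else if r = 5 then 4 else r) else fA r)"

definition okJ :: "nat \<Rightarrow> nat \<Rightarrow> nat \<Rightarrow> bool" where "okJ j i r \<longleftrightarrow> \<not> (i = j \<and> (r = 3 \<or> r = 7))"
definition okK :: "nat \<Rightarrow> nat \<Rightarrow> nat \<Rightarrow> bool" where "okK j i r \<longleftrightarrow> \<not> (i = j \<and> (r = 2 \<or> r = 6))"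

lemma card_full: "8*s - 2 \<le> card {v. v < 8*s \<and> True}" by simp

lemma card_minus2:
  assumes "\<And>v. v < 8*s \<Longrightarrow> v \<noteq> a \<Longrightarrow> v \<noteq> b \<Longrightarrow> ok (v div 8) (v mod 8)"
  shows "8*s - 2 \<le> card {v. v < 8*s \<and> ok (v div 8) (v mod 8)}"
proof -
  have "{..<8*s} - {a,b} \<subseteq> {v. v < 8*s \<and> ok (v div 8) (v mod 8)}" using assms by auto
  then have "card ({..<8*s} - {a,b}) \<le> card {v. v < 8*s \<and> ok (v div 8) (v mod 8)}"
    by (intro card_mono) auto
  moreover have "card {..<8*s} - card {a,b} \<le> card ({..<8*s} - {a,b})" by (rule diff_card_le_card_Diff) auto
  moreover have "card {a,b} \<le> 2" by (rule card_insert_le_m1) auto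
  ultimately show ?thesis by simp
qed

lemma goodA: "good s (P (\<lambda>i r. i) (\<lambda>i r. fA r)) {v. v < 8*s \<and> (\<lambda>i r. True) (v div 8) (v mod 8)}"
  by (rule P_good) (use r8 in \<open>auto simp: fA_def Nb_def\<close>)

lemma goodB: assumes "2 \<le> s"
  shows "good s (P (gB s) (\<lambda>i r. fB r)) {v. v < 8*s \<and> (\<lambda>i r. True) (v div 8) (v mod 8)}"
  by (rule P_good) (use r8 in \<open>auto simp: fB_def gB_def Nb_def prv_lt nxt_lt\<close>)

lemma goodJ: assumes "j < s"
  shows "good s (P (\<lambda>i r. i) (fJ j)) {v. v < 8*s \<and> okJ j (v div 8) (v mod 8)}"
proof (rule P_good)
  show "8*s - 2 \<le> card {v. v < 8*s \<and> okJ j (v div 8) (v mod 8)}"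
    by (rule card_minus2[of _ "vx j 3" "vx j 7"]) (auto simp: okJ_def; metis vdm)
qed (use r8 in \<open>auto simp: fJ_def fA_def okJ_def Nb_def\<close>)

lemma goodK: assumes "j < s"
  shows "good s (P (\<lambda>i r. i) (fK j)) {v. v < 8*s \<and> okK j (v div 8) (v mod 8)}"
proof (rule P_good)
  show "8*s - 2 \<le> card {v. v < 8*s \<and> okK j (v div 8) (v mod 8)}"
    by (rule card_minus2[of _ "vx j 2" "vx j 6"]) (auto simp: okK_def; metis vdm)
qed (use r8 in \<open>auto simp: fK_def fA_def okK_def Nb_def\<close>)


definition Hs :: "nat \<Rightarrow> nat set set" where
  "Hs s = {{vx i 0, vx i t} | i t. i < s \<and> (t = 6 \<or> t = 7)}"

lemma Nb_L: assumes "c \<in> {1,2,3,4,5}" "u \<in> Nb s i c"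
  shows "u \<in> {vx i 1, vx i 2, vx i 3, vx i 4, vx i 5} \<or> (u = vx i 0 \<and> c = 1)"
  using assms by (auto simp: Nb_def)

lemma Min_hub: "t < 8 \<Longrightarrow> Min {vx i 0, vx i t} div 8 = i"
  by (simp add: vx_def)

lemma hub_bound:
  assumes s: "1 \<le> s" and M: "k_matching (Ed s) (4*s-1) M"
  shows "card (M \<inter> Hs s) \<le> 2"
proof -
  have ME: "M \<subseteq> Ed s" and dis: "\<forall>e\<in>M. \<forall>f\<in>M. e \<noteq> f \<longrightarrow> e \<inter> f = {}" and cM: "card M = 4*s-1"
    using M unfolding k_matching_def matching_def by auto
  have finM: "finite M" using ME finite_Ed finite_subset by blast
  have c2: "\<forall>e\<in>M. card e = 2"
  proof
    fix e assume "e \<in> M"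
    then have "e \<in> Ed s" using ME by blast
    then obtain v u where "e = {v,u}" "v < 8*s" "u \<in> N s v" by (auto simp: Ed_def)
    then show "card e = 2" using N_sym[of v s u] by auto
  qed
  have cU: "card (\<Union>M) = 8*s - 2" using union_card[OF finM c2 dis] cM s by simp
  have UV: "\<Union>M \<subseteq> {..<8*s}" using ME Ed_sub by blast
  define F where "F = {..<8*s} - \<Union>M"
  have cF: "card F = 2" unfolding F_def using card_Diff_subset[OF finite_subset[OF UV] UV] cU s by simp
  have finF: "finite F" unfolding F_def by simp
  define I where "I = {i. i < s \<and> (\<exists>t. (t = 6 \<or> t = 7) \<and> {vx i 0, vx i t} \<in> M)}"
  have step1: "card (M \<inter> Hs s) \<le> card I"
  proof (rule card_inj_on_le[where f = "\<lambda>e. Min e div 8"])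
    show "inj_on (\<lambda>e. Min e div 8) (M \<inter> Hs s)"
    proof (rule inj_onI)
      fix e f assume e: "e \<in> M \<inter> Hs s" and f: "f \<in> M \<inter> Hs s" and eq: "Min e div 8 = Min f div 8"
      from e obtain i t where et: "e = {vx i 0, vx i t}" "t = 6 \<or> t = 7" by (auto simp: Hs_def)
      from f obtain j t' where ft: "f = {vx j 0, vx j t'}" "t' = 6 \<or> t' = 7" by (auto simp: Hs_def)
      have "i = j" using eq et ft Min_hub[of t i] Min_hub[of t' j] by auto
      then have "vx i 0 \<in> e \<inter> f" using et ft by auto
      then show "e = f" using dis e f by blast
    qed
    show "(\<lambda>e. Min e div 8) ` (M \<inter> Hs s) \<subseteq> I"
    proof
      fix x assume "x \<in> (\<lambda>e. Min e div 8) ` (M \<inter> Hs s)"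
      then obtain e where e: "e \<in> M \<inter> Hs s" "x = Min e div 8" by blast
      from e obtain i t where et: "e = {vx i 0, vx i t}" "t = 6 \<or> t = 7" "i < s" by (auto simp: Hs_def)
      have xi: "x = i" using e(2) et Min_hub[of t i] by auto
      have "{vx i 0, vx i t} \<in> M" using e(1) et(1) by simp
      then have "i \<in> I" unfolding I_def using et(2,3) by blast
      then show "x \<in> I" using xi by simp
    qed
    show "finite I" unfolding I_def by simp
  qed
  have step2: "I \<subseteq> (\<lambda>x. x div 8) ` F"
  proof
    fix i assume "i \<in> I"
    then obtain t where i: "i < s" and t: "t = 6 \<or> t = 7" and e0: "{vx i 0, vx i t} \<in> M"
      by (auto simp: I_def)
    show "i \<in> (\<lambda>x. x div 8) ` F"
    proof (rule ccontr)
      assume nF: "i \<notin> (\<lambda>x. x div 8) ` F"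
      define L where "L = {vx i 1, vx i 2, vx i 3, vx i 4, vx i 5}"
      have LU: "L \<subseteq> \<Union>M"
      proof
        fix x assume "x \<in> L"
        then have xs: "x < 8*s" "x div 8 = i" using i by (auto simp: L_def)
        have "x \<notin> F" using nF xs(2) by (metis image_eqI)
        then show "x \<in> \<Union>M" using xs(1) unfolding F_def by simp
      qed
      have bM: "{vx i 0, vx i 1} \<notin> M"
      proof
        assume b: "{vx i 0, vx i 1} \<in> M"
        have neq: "{vx i 0, vx i 1} \<noteq> {vx i 0, vx i t}" using t by (auto simp: doubleton_eq_iff)
        have "{vx i 0, vx i 1} \<inter> {vx i 0, vx i t} = {}" using bspec[OF bspec[OF dis b] e0] neq by blast
        then show False by simp
      qed
      define ML0 where "ML0 = {e \<in> M. e \<subseteq> L}"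
      have "\<Union>ML0 = L"
      proof
        show "\<Union>ML0 \<subseteq> L" unfolding ML0_def by blast
        show "L \<subseteq> \<Union>ML0"
        proof
          fix x assume xL: "x \<in> L"
          then obtain e where e: "e \<in> M" "x \<in> e" using LU by blast
          then obtain u where u: "u \<in> N s x" "e = {x,u}" using Ed_inc[of e s x] ME by blast
          from xL obtain c where c: "c \<in> {1,2,3,4,5}" "x = vx i c" unfolding L_def by auto
          have "u \<in> Nb s i c" using u(1) c by auto
          from Nb_L[OF c(1) this] have "u \<in> L \<or> (u = vx i 0 \<and> c = 1)" unfolding L_def .
          then have "u \<in> L" using bM e u c by (auto simp: insert_commute)
          then show "x \<in> \<Union>ML0" using e u xL unfolding ML0_def by blast
        qed
      qed
      moreover have "card (\<Union>ML0) = 2 * card ML0"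
        using union_card[of ML0] finM c2 dis unfolding ML0_def by auto
      moreover have "card L = 5" unfolding L_def by simp
      ultimately show False by presburger
    qed
  qed
  have "card I \<le> card F"
    using card_mono[OF _ step2] card_image_le[OF finF, of "\<lambda>x. x div 8"] finF by fastforce
  then show ?thesis using step1 cF by linarith
qed

lemma Hs_sub: "Hs s \<subseteq> Ed s"
proof
  fix e assume "e \<in> Hs s"
  then obtain i t where et: "e = {vx i 0, vx i t}" "t = 6 \<or> t = 7" "i < s" by (auto simp: Hs_def)
  have "vx i t \<in> N s (vx i 0)" using et by (auto simp: Nb_def)
  then show "e \<in> Ed s" using et Ed_iff[of "vx i 0" s "vx i t"] by simp
qed

lemma card_Hs: "card (Hs s) = 2 * s"
proof -
  have "Hs s = (\<lambda>(i,t). {vx i 0, vx i t}) ` ({..<s} \<times> {6,7})"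
    unfolding Hs_def by auto
  moreover have "inj_on (\<lambda>(i,t). {vx i 0, vx i t}) ({..<s} \<times> {6,7})"
    by (auto simp: inj_on_def doubleton_eq_iff)
  ultimately show ?thesis by (simp add: card_image card_cartesian_product)
qed

lemma length_bound:
  assumes s: "1 \<le> s" and Ms: "\<forall>M\<in>set Ms. k_matching (Ed s) (4*s-1) M" and U: "\<Union>(set Ms) = Ed s"
  shows "s \<le> length Ms"
proof -
  have "Hs s = (\<Union>M\<in>set Ms. M \<inter> Hs s)" using Hs_sub U by blast
  then have "card (Hs s) \<le> (\<Sum>M\<in>set Ms. card (M \<inter> Hs s))"
    using card_UN_le[of "set Ms" "\<lambda>M. M \<inter> Hs s"] by simp
  also have "\<dots> \<le> of_nat (card (set Ms)) * 2"
    using hub_bound[OF s] Ms by (intro sum_bounded_above) auto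
  also have "\<dots> \<le> length Ms * 2" using card_length[of Ms] by simp
  finally show ?thesis using card_Hs[of s] by simp
qed

lemma cover:
  assumes s: "2 \<le> s" and v: "v < 8*s" and u: "u \<in> N s v"
  shows "\<exists>M. k_matching (Ed s) (4*s-1) M \<and> {v,u} \<in> M"
  using v
proof (rule vsplit)
  fix i r assume i: "i < s" and r: "r < 8" and vv: "v = vx i r"
  have s1: "1 \<le> s" using s by simp
  have u': "u \<in> Nb s i r" using u vv r by simp
  have gA: "\<And>w. w < 8*s \<Longrightarrow> \<exists>M. k_matching (Ed s) (4*s-1) M \<and> {w, P (\<lambda>i r. i) (\<lambda>i r. fA r) w} \<in> M"
    using good_match[OF goodA _ s1] by simp
  have gB: "\<And>w. w < 8*s \<Longrightarrow> \<exists>M. k_matching (Ed s) (4*s-1) M \<and> {w, P (gB s) (\<lambda>i r. fB r) w} \<in> M"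
    using good_match[OF goodB[OF s] _ s1] by simp
  have gJ: "\<And>w. w < 8*s \<Longrightarrow> okJ i (w div 8) (w mod 8) \<Longrightarrow> \<exists>M. k_matching (Ed s) (4*s-1) M \<and> {w, P (\<lambda>i r. i) (fJ i) w} \<in> M"
    using good_match[OF goodJ[OF i] _ s1] by simp
  have gK: "\<And>w. w < 8*s \<Longrightarrow> okK i (w div 8) (w mod 8) \<Longrightarrow> \<exists>M. k_matching (Ed s) (4*s-1) M \<and> {w, P (\<lambda>i r. i) (fK i) w} \<in> M"
    using good_match[OF goodK[OF i] _ s1] by simp
  have "u = P (\<lambda>i r. i) (\<lambda>i r. fA r) v \<or> u = P (gB s) (\<lambda>i r. fB r) v
      \<or> (okJ i i r \<and> u = P (\<lambda>i r. i) (fJ i) v) \<or> (okK i i r \<and> u = P (\<lambda>i r. i) (fK i) v)"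
    using r8[OF r] u' unfolding vv P_at[OF r]
    by (elim disjE) (auto simp: fA_def fB_def gB_def fJ_def fK_def okJ_def okK_def Nb_def)
  then show ?thesis using gA[OF v] gB[OF v] gJ[OF v] gK[OF v] vv r by auto
qed


theorem proposition2:
  fixes m :: nat
  assumes "m \<ge> 3"
  shows "\<exists>(V :: nat set) E n. simple_graph V E \<and> connected_graph V E \<and> cubic V E
            \<and> card V = 2 * n
            \<and> (\<forall>e\<in>E. \<exists>M. k_matching E (n - 1) M \<and> e \<in> M)
            \<and> excessive_index E (n - 1) \<ge> enat m"
proof -
  have m2: "2 \<le> m" and m1: "1 \<le> m" using assms by auto
  have edges: "\<forall>e\<in>Ed m. \<exists>M. k_matching (Ed m) (4*m - 1) M \<and> e \<in> M"
  proof
    fix e assume "e \<in> Ed m"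
    then obtain v u where "e = {v,u}" "v < 8*m" "u \<in> N m v" by (auto simp: Ed_def)
    then show "\<exists>M. k_matching (Ed m) (4*m - 1) M \<and> e \<in> M" using cover[OF m2] by blast
  qed
  have cub: "cubic {..<8*m} (Ed m)" unfolding cubic_def using degree_Ed m2 by auto
  have idx: "excessive_index (Ed m) (4*m - 1) \<ge> enat m"
  proof -
    let ?Q = "\<lambda>t. \<exists>Ms. length Ms = t \<and> (\<forall>M\<in>set Ms. k_matching (Ed m) (4*m-1) M) \<and> \<Union>(set Ms) = Ed m"
    obtain es where es: "set es = Ed m" using finite_list[OF finite_Ed] by blast
    define f where "f e = (SOME M. k_matching (Ed m) (4*m-1) M \<and> e \<in> M)" for e
    have fe: "k_matching (Ed m) (4*m-1) (f e) \<and> e \<in> f e" if "e \<in> Ed m" for e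
      unfolding f_def using someI_ex[OF bspec[OF edges that]] .
    have fs: "f e \<subseteq> Ed m" if "e \<in> Ed m" for e
      using fe[OF that] unfolding k_matching_def matching_def by blast
    have "?Q (length (map f es))"
    proof (intro exI conjI)
      show "\<forall>M\<in>set (map f es). k_matching (Ed m) (4*m-1) M" using fe es by auto
      show "\<Union>(set (map f es)) = Ed m"
      proof
        show "\<Union>(set (map f es)) \<subseteq> Ed m" using fs es by auto
        show "Ed m \<subseteq> \<Union>(set (map f es))"
        proof
          fix e assume e: "e \<in> Ed m"
          then have "f e \<in> set (map f es)" using es by simp
          then show "e \<in> \<Union>(set (map f es))" using fe[OF e] by blast
        qed
      qed
    qed simp
    then have "?Q (Least ?Q)" by (rule LeastI)
    then obtain Ms where Ms: "length Ms = Least ?Q" "\<forall>M\<in>set Ms. k_matching (Ed m) (4*m-1) M" "\<Union>(set Ms) = Ed m"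
      by blast
    then have "m \<le> Least ?Q" using length_bound[OF m1 Ms(2) Ms(3)] by simp
    then show ?thesis unfolding excessive_index_def using edges by simp
  qed
  have "simple_graph {..<8*m} (Ed m) \<and> connected_graph {..<8*m} (Ed m) \<and> cubic {..<8*m} (Ed m)
            \<and> card {..<8*m} = 2 * (4*m)
            \<and> (\<forall>e\<in>Ed m. \<exists>M. k_matching (Ed m) (4*m - 1) M \<and> e \<in> M)
            \<and> excessive_index (Ed m) (4*m - 1) \<ge> enat m"
    using simple_Ed conn_Ed[OF m1] cub edges idx by simp
  then show ?thesis by blast
qed

end
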